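(* Let $M$ be a positive integer, let $\{\alpha_i\}_{i=0}^{M}$ be a log-concave sequence of non-negative real numbers, and let $g(x)=\sum_{i=0}^{M}\alpha_{i}\binom{M}{i}(1-x)^{i}x^{M-i}$. Then for every $x\in(0,1)$, \[ \frac{M-1}{M}\,g'(x)^{2}\;\ge\; g(x)\,g''(x). \]
   Context: A non-negative sequence $\{a_i\}_{i=0}^{n}$ is called log-concave if, for indices $i,j$ with $i+j$ held fixed, the product $a_ia_j$ is a non-increasing function of $|i-j|$. $\binom{M}{i}$ is the ordinary binomial coefficient. *)

theory Defs
  imports "HOL-Analysis.Analysis"
begin

definition log_concave_seq :: "nat \<Rightarrow> (nat \<Rightarrow> real) \<Rightarrow> bool" where
  "log_concave_seq n a \<longleftrightarrow>
     (\<forall>i\<le>n. a i \<ge> 0) \<and>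
     (\<forall>i j k l. i \<le> n \<longrightarrow> j \<le> n \<longrightarrow> k \<le> n \<longrightarrow> l \<le> n \<longrightarrow> i + j = k + l \<longrightarrow>
        \<bar>int i - int j\<bar> \<le> \<bar>int k - int l\<bar> \<longrightarrow> a k * a l \<le> a i * a j)"

end

theory Submission
  imports Defs
begin

lemma binom_shift: "(k+1) * (M choose (k+1)) = M * ((M-1) choose k)"
  using times_binomial_minus1_eq[of "k+1" M] by simp

lemma sum_ij_choose:
  fixes M m :: nat
  shows "(\<Sum>i\<le>m+2. i * (m+2-i) * ((M choose i) * (M choose (m+2-i)))) = M*M*((2*M-2) choose m)"
proof -
  define f where "f i = i * (m+2-i) * ((M choose i) * (M choose (m+2-i)))" for i
  have "(\<Sum>i\<le>m+2. f i) = f 0 + (\<Sum>k\<le>m+1. f (Suc k))"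
  proof -
    have "m+2 = Suc (m+1)" by simp
    then show ?thesis by (simp only: sum.atMost_Suc_shift)
  qed
  also have "\<dots> = (\<Sum>k\<le>m. f (Suc k))" by (simp add: f_def)
  also have "\<dots> = (\<Sum>k\<le>m. M*M*(((M-1) choose k) * ((M-1) choose (m-k))))"
  proof (rule sum.cong[OF refl])
    fix k assume "k \<in> {..m}"
    then have k: "k \<le> m" by simp
    have e: "m + 2 - Suc k = (m - k) + 1" using k by simp
    have "f (Suc k) = ((k+1) * (M choose (k+1))) * (((m-k)+1) * (M choose ((m-k)+1)))"
      unfolding f_def e by (simp add: algebra_simps)
    also have "\<dots> = M*M*(((M-1) choose k) * ((M-1) choose (m-k)))"
      by (simp only: binom_shift) (simp add: ac_simps)
    finally show "f (Suc k) = \<dots>" .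
  qed
  also have "\<dots> = M*M*((M-1+(M-1)) choose m)"
    by (simp add: sum_distrib_left[symmetric] vandermonde)
  also have "M-1+(M-1) = 2*M-2" by simp
  finally show ?thesis by (simp add: f_def)
qed

lemma choose2: "(m+2)*(m+1)*((2*M) choose (m+2)) = 2*M*(2*M-1)*((2*M-2) choose m)"
proof -
  have a: "(m+2)*((2*M) choose (m+2)) = 2*M*((2*M-1) choose (m+1))"
    using times_binomial_minus1_eq[of "m+2" "2*M"] by simp
  have b: "(m+1)*((2*M-1) choose (m+1)) = (2*M-1)*((2*M-2) choose m)"
  proof -
    have "(m+1)*((2*M-1) choose (m+1)) = (2*M-1)*((2*M-1-1) choose (m+1-1))"
      by (rule times_binomial_minus1_eq) simp
    moreover have e: "2*M-1-1 = 2*M-2" by simp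
    ultimately show ?thesis by (simp only: e add_diff_cancel_right')
  qed
  have "(m+2)*(m+1)*((2*M) choose (m+2)) = (m+1)*((m+2)*((2*M) choose (m+2)))" by (metis mult.assoc mult.commute)
  also have "\<dots> = 2*M*((m+1)*((2*M-1) choose (m+1)))" by (simp only: a) (simp add: ac_simps)
  also have "\<dots> = 2*M*(2*M-1)*((2*M-2) choose m)" by (simp only: b)
  finally show ?thesis .
qed

lemma sumK_zero:
  fixes M n :: nat
  shows "(\<Sum>i\<le>n. real ((M choose i)*(M choose (n-i))) *
     (real n*(2*real M - real n) - (2*real M-1)*(2*real i - real n)^2)) = 0"
proof -
  define B where "B i = real ((M choose i)*(M choose (n-i)))" for i
  define S where "S = real (\<Sum>i\<le>n. i * (n-i) * ((M choose i) * (M choose (n-i))))"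
  have V: "(\<Sum>i\<le>n. B i) = real ((2*M) choose n)"
  proof -
    have "(\<Sum>i\<le>n. B i) = real (\<Sum>i\<le>n. (M choose i)*(M choose (n-i)))" unfolding B_def by simp
    also have "\<dots> = real ((2*M) choose n)" by (simp only: vandermonde mult_2)
    finally show ?thesis .
  qed
  have "(\<Sum>i\<le>n. B i * (real n*(2*real M - real n) - (2*real M-1)*(2*real i - real n)^2))
      = (\<Sum>i\<le>n. B i * (real n*(2*real M - real n) - (2*real M-1)*(real n)^2)
            + 4*(2*real M-1) * (real (i*(n-i)) * B i))"
  proof (rule sum.cong[OF refl])
    fix i assume "i \<in> {..n}"
    then have "real (n-i) = real n - real i" by simp
    then show "B i * (real n*(2*real M - real n) - (2*real M-1)*(2*real i - real n)^2) =
      B i * (real n*(2*real M - real n) - (2*real M-1)*(real n)^2) + 4*(2*real M-1) * (real (i*(n-i)) * B i)"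
      by (simp add: power2_eq_square algebra_simps)
  qed
  also have "\<dots> = real ((2*M) choose n) * (real n*(2*real M - real n) - (2*real M-1)*(real n)^2) + 4*(2*real M-1)*S"
  proof -
    have s1: "(\<Sum>i\<le>n. B i * (real n*(2*real M - real n) - (2*real M-1)*(real n)^2))
       = (\<Sum>i\<le>n. B i) * (real n*(2*real M - real n) - (2*real M-1)*(real n)^2)"
      by (simp add: sum_distrib_right)
    have s2: "(\<Sum>i\<le>n. 4*(2*real M-1) * (real (i*(n-i)) * B i)) = 4*(2*real M-1)*S"
      by (simp add: S_def B_def sum_distrib_left mult.assoc)
    show ?thesis by (simp only: sum.distrib s1 s2 V)
  qed
  also have "\<dots> = 0"
  proof (cases "n < 2")
    case True
    then have "S = 0" unfolding S_def by (intro of_nat_eq_0_iff[THEN iffD2] sum.neutral) auto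
    moreover have "n = 0 \<or> n = 1" using True by auto
    ultimately show ?thesis by auto
  next
    case False
    then obtain m where m: "n = m+2" by (metis add.commute le_Suc_ex not_less)
    have S: "S = real M * real M * real ((2*M-2) choose m)"
      unfolding S_def m by (simp only: sum_ij_choose) simp
    have c: "(real m+2)*(real m+1)*real ((2*M) choose (m+2)) = 2*real M*(2*real M-1)*real ((2*M-2) choose m)"
    proof (cases "M = 0")
      case True then show ?thesis by simp
    next
      case False
      have "real ((m+2)*(m+1)*((2*M) choose (m+2))) = real (2*M*(2*M-1)*((2*M-2) choose m))"
        by (simp only: choose2)
      then have "real (m+2)*real (m+1)*real ((2*M) choose (m+2)) = real (2*M)*real (2*M-1)*real ((2*M-2) choose m)"
        by (simp only: of_nat_mult)
      moreover have "real (2*M-1) = 2*real M - 1" using False by (simp add: of_nat_diff)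
      ultimately show ?thesis by (simp add: add.commute)
    qed
    have d: "4*(2*real M-1)*(real M * real M * real ((2*M-2) choose m)) = 2*real M*((real m+2)*(real m+1)*real ((2*M) choose (m+2)))"
      by (simp only: c) (simp add: algebra_simps)
    have rn: "real n = real m + 2" using m by simp
    show ?thesis unfolding S rn d unfolding m
      by (simp add: algebra_simps power2_eq_square) 
  qed
  finally show ?thesis by (simp add: B_def)
qed

lemma chebyshev_id:
  fixes B W K :: "nat \<Rightarrow> real" and I :: "nat set"
  shows "(\<Sum>i\<in>I. \<Sum>k\<in>I. B i*B k*(W i-W k)*(K i-K k)) =
    2*(\<Sum>i\<in>I. B i)*(\<Sum>i\<in>I. B i*W i*K i) - 2*(\<Sum>i\<in>I. B i*W i)*(\<Sum>i\<in>I. B i*K i)"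
proof -
  have "(\<Sum>i\<in>I. \<Sum>k\<in>I. B i*B k*(W i-W k)*(K i-K k)) =
     (\<Sum>i\<in>I. \<Sum>k\<in>I. (B i*W i*K i)*B k + B i*(B k*W k*K k) - (B i*W i)*(B k*K k) - (B i*K i)*(B k*W k))"
    by (intro sum.cong refl) (simp add: algebra_simps)
  also have "\<dots> = (\<Sum>i\<in>I. (B i*W i*K i)*(\<Sum>k\<in>I. B k) + B i*(\<Sum>k\<in>I. B k*W k*K k) - (B i*W i)*(\<Sum>k\<in>I. B k*K k) - (B i*K i)*(\<Sum>k\<in>I. B k*W k))"
    by (simp add: sum.distrib sum_subtractf sum_distrib_left)
  also have "\<dots> = (\<Sum>i\<in>I. B i*W i*K i)*(\<Sum>k\<in>I. B k) + (\<Sum>i\<in>I. B i)*(\<Sum>k\<in>I. B k*W k*K k) - (\<Sum>i\<in>I. B i*W i)*(\<Sum>k\<in>I. B k*K k) - (\<Sum>i\<in>I. B i*K i)*(\<Sum>k\<in>I. B k*W k)"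
    by (simp add: sum.distrib sum_subtractf sum_distrib_right)
  finally show ?thesis by (simp add: algebra_simps)
qed

lemma Sn_nonneg:
  assumes lc: "log_concave_seq M \<alpha>" and n: "n \<le> 2*M" and M1: "M \<ge> 1"
  shows "0 \<le> (\<Sum>i\<le>n. (\<alpha> i * real (M choose i)) * (\<alpha> (n-i) * real (M choose (n-i))) *
             (real n*(2*real M - real n) - (2*real M-1)*(2*real i - real n)^2))"
proof -
  define B where "B i = real ((M choose i)*(M choose (n-i)))" for i
  define W where "W i = \<alpha> i * \<alpha> (n-i)" for i
  define K where "K i = real n*(2*real M - real n) - (2*real M-1)*(2*real i - real n)^2" for i
  have Bnn: "B i \<ge> 0" for i unfolding B_def by simp
  have KM: "K k \<le> K i" if "\<bar>2*real i - real n\<bar> \<le> \<bar>2*real k - real n\<bar>" for i k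
  proof -
    have "(2*real i - real n)^2 \<le> (2*real k - real n)^2"
      using that by (metis abs_ge_zero power2_abs power_mono)
    moreover have "2*real M - 1 \<ge> 0" using M1 by simp
    ultimately show ?thesis unfolding K_def by (simp add: mult_left_mono)
  qed
  have WM: "W k \<le> W i" if "\<bar>2*real i - real n\<bar> \<le> \<bar>2*real k - real n\<bar>" "B i \<noteq> 0" "B k \<noteq> 0"
      "i \<le> n" "k \<le> n" for i k
  proof -
    have "i \<le> M" "n-i \<le> M" "k \<le> M" "n-k \<le> M" using that(2,3) unfolding B_def
      by (auto simp: binomial_eq_0_iff)
    moreover have "\<bar>int i - int (n-i)\<bar> \<le> \<bar>int k - int (n-k)\<bar>"
    proof -
      have "real_of_int \<bar>int i - int (n-i)\<bar> \<le> real_of_int \<bar>int k - int (n-k)\<bar>"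
        using that(1,4,5) by (simp add: of_nat_diff)
      then show ?thesis by linarith
    qed
    moreover have "i + (n-i) = k + (n-k)" using that by simp
    ultimately show ?thesis using lc unfolding log_concave_seq_def W_def by blast
  qed
  have key: "0 \<le> B i*B k*(W i-W k)*(K i-K k)" if "i \<le> n" "k \<le> n" for i k
  proof (cases "B i = 0 \<or> B k = 0")
    case True then show ?thesis by auto
  next
    case False
    have bb: "B i * B k \<ge> 0" using Bnn by simp
    show ?thesis
    proof (cases "\<bar>2*real i - real n\<bar> \<le> \<bar>2*real k - real n\<bar>")
      case True
      then have "W i - W k \<ge> 0" "K i - K k \<ge> 0" using KM WM False that by auto
      then show ?thesis using bb by (metis mult_nonneg_nonneg mult.assoc)
    next
      case c: False
      then have "W i - W k \<le> 0" "K i - K k \<le> 0" using KM[of k i] WM[of k i] False that by auto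
      then show ?thesis using bb by (metis mult_nonneg_nonneg mult.assoc mult_nonpos_nonpos)
    qed
  qed
  have "0 \<le> (\<Sum>i\<le>n. \<Sum>k\<le>n. B i*B k*(W i-W k)*(K i-K k))"
    using key by (intro sum_nonneg) auto
  also have "\<dots> = 2*(\<Sum>i\<le>n. B i)*(\<Sum>i\<le>n. B i*W i*K i)"
    unfolding chebyshev_id using sumK_zero[of M n] by (simp add: B_def K_def)
  finally have 1: "0 \<le> (\<Sum>i\<le>n. B i)*(\<Sum>i\<le>n. B i*W i*K i)" by simp
  have "(\<Sum>i\<le>n. B i) = real ((2*M) choose n)"
  proof -
    have "(\<Sum>i\<le>n. B i) = real (\<Sum>i\<le>n. (M choose i)*(M choose (n-i)))" unfolding B_def by simp
    also have "\<dots> = real ((2*M) choose n)" by (simp only: vandermonde mult_2)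
    finally show ?thesis .
  qed
  moreover have "real ((2*M) choose n) > 0" using n by simp
  ultimately have "0 \<le> (\<Sum>i\<le>n. B i*W i*K i)" using 1 by (simp add: zero_le_mult_iff)
  also have "\<dots> = (\<Sum>i\<le>n. (\<alpha> i * real (M choose i)) * (\<alpha> (n-i) * real (M choose (n-i))) *
             (real n*(2*real M - real n) - (2*real M-1)*(2*real i - real n)^2))"
    by (simp add: B_def W_def K_def algebra_simps)
  finally show ?thesis .
qed

lemma final_ineq:
  fixes u v :: real and \<alpha> :: "nat \<Rightarrow> real"
  assumes u: "u > 0" and v: "v > 0" and uv: "u + v = 1" and M1: "M \<ge> 1"
    and lc: "log_concave_seq M \<alpha>"
  defines "c \<equiv> (\<lambda>i. \<alpha> i * real (M choose i))"
    and "T \<equiv> (\<lambda>i. u^i * v^(M-i))"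
    and "P \<equiv> (\<lambda>i. (real M - real i)*u - real i* v)"
    and "Q \<equiv> (\<lambda>i. real i*(real i-1)* v^2 - 2*real i*(real M-real i)*u* v + (real M-real i)*(real M - real i-1)*u^2)"
  shows "0 \<le> (real M - 1)*(\<Sum>i\<le>M. c i*T i*P i)^2 - real M*(\<Sum>i\<le>M. c i*T i)*(\<Sum>i\<le>M. c i*T i*Q i)"
proof -
  define K where "K i j = (real i + real j)*(2*real M - real i - real j) - (2*real M - 1)*(real i - real j)^2" for i j
  define f where "f i j = c i * c j * T i * T j" for i j
  have X1: "(real M - 1)*(\<Sum>i\<le>M. c i*T i*P i)^2 - real M*(\<Sum>i\<le>M. c i*T i)*(\<Sum>i\<le>M. c i*T i*Q i)
     = (\<Sum>i\<le>M. \<Sum>j\<le>M. f i j * ((real M - 1)*P i*P j)) - real M * (\<Sum>i\<le>M. \<Sum>j\<le>M. f i j * Q i)"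
    by (simp add: power2_eq_square sum_distrib_left sum_distrib_right f_def algebra_simps)
  have sw: "(\<Sum>i\<le>M. \<Sum>j\<le>M. f i j * Q j) = (\<Sum>i\<le>M. \<Sum>j\<le>M. f i j * Q i)"
    by (subst sum.swap) (simp add: f_def algebra_simps)
  have X2: "(real M - 1)*(\<Sum>i\<le>M. c i*T i*P i)^2 - real M*(\<Sum>i\<le>M. c i*T i)*(\<Sum>i\<le>M. c i*T i*Q i) = (\<Sum>i\<le>M. \<Sum>j\<le>M. f i j * ((real M - 1)*P i*P j - real M*(Q i + Q j)/2))"
  proof -
    have "(\<Sum>i\<le>M. \<Sum>j\<le>M. f i j * ((real M - 1)*P i*P j - real M*(Q i + Q j)/2))
      = (\<Sum>i\<le>M. \<Sum>j\<le>M. f i j * ((real M - 1)*P i*P j) - (real M/2)*(f i j * Q i) - (real M/2)*(f i j * Q j))"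
      by (intro sum.cong refl) (simp add: algebra_simps add_divide_distrib)
    also have "\<dots> = (\<Sum>i\<le>M. \<Sum>j\<le>M. f i j * ((real M - 1)*P i*P j)) - (real M/2)*(\<Sum>i\<le>M. \<Sum>j\<le>M. f i j * Q i)
       - (real M/2)*(\<Sum>i\<le>M. \<Sum>j\<le>M. f i j * Q j)"
      by (simp only: sum_subtractf sum_distrib_left)
    finally have h: "(\<Sum>i\<le>M. \<Sum>j\<le>M. f i j * ((real M - 1)*P i*P j - real M*(Q i + Q j)/2))
      = (\<Sum>i\<le>M. \<Sum>j\<le>M. f i j * ((real M - 1)*P i*P j)) - (real M/2)*(\<Sum>i\<le>M. \<Sum>j\<le>M. f i j * Q i)
       - (real M/2)*(\<Sum>i\<le>M. \<Sum>j\<le>M. f i j * Q i)" unfolding sw .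
    have hh: "(real M/2)*(\<Sum>i\<le>M. \<Sum>j\<le>M. f i j * Q i) + (real M/2)*(\<Sum>i\<le>M. \<Sum>j\<le>M. f i j * Q i)
      = real M * (\<Sum>i\<le>M. \<Sum>j\<le>M. f i j * Q i)" by simp
    show ?thesis unfolding X1 h using hh by linarith
  qed
  also have "\<dots> = (\<Sum>i\<le>M. \<Sum>j\<le>M. (c i * c j * u^(i+j) * v^(2*M-(i+j)) * K i j) / 4)"
  proof (intro sum.cong refl)
    fix i j assume i: "i \<in> {..M}" and j: "j \<in> {..M}"
    have TT: "T i * T j = u^(i+j) * v^(2*M-(i+j))"
    proof -
      have "2*M-(i+j) = (M-i) + (M-j)" using i j by auto
      then show ?thesis unfolding T_def by (simp add: power_add)
    qed
    have "(real M - 1)*P i*P j - real M*(Q i + Q j)/2 = K i j * (u+v)^2/4"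
      unfolding P_def Q_def K_def by (simp add: power2_eq_square field_simps)
    then show "f i j * ((real M - 1)*P i*P j - real M*(Q i + Q j)/2) = (c i * c j * u^(i+j) * v^(2*M-(i+j)) * K i j) / 4"
      unfolding f_def using uv by (simp add: mult.assoc TT[symmetric])
  qed
  also have "\<dots> = (\<Sum>(i,j)\<in>{..M}\<times>{..M}. (c i * c j * u^(i+j) * v^(2*M-(i+j)) * K i j) / 4)"
    by (simp add: sum.cartesian_product)
  also have "\<dots> = (\<Sum>(i,j)\<in>{(i,j). i+j \<le> 2*M}. (c i * c j * u^(i+j) * v^(2*M-(i+j)) * K i j) / 4)"
  proof (rule sum.mono_neutral_left)
    show "finite {(i, j). i + j \<le> 2 * M}"
      by (rule finite_subset[of _ "{..2*M}\<times>{..2*M}"]) auto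
    show "{..M} \<times> {..M} \<subseteq> {(i, j). i + j \<le> 2 * M}" by auto
    show "\<forall>x\<in>{(i, j). i + j \<le> 2 * M} - {..M} \<times> {..M}. (case x of (i,j) \<Rightarrow> (c i * c j * u^(i+j) * v^(2*M-(i+j)) * K i j) / 4) = 0"
      by (auto simp: c_def)
  qed
  also have "\<dots> = (\<Sum>n\<le>2*M. \<Sum>i\<le>n. (c i * c (n-i) * u^(i+(n-i)) * v^(2*M-(i+(n-i))) * K i (n-i)) / 4)"
    by (rule sum.triangle_reindex_eq)
  also have "\<dots> = (\<Sum>n\<le>2*M. u^n * v^(2*M-n) / 4 * (\<Sum>i\<le>n. (\<alpha> i * real (M choose i)) * (\<alpha> (n-i) * real (M choose (n-i))) *
             (real n*(2*real M - real n) - (2*real M-1)*(2*real i - real n)^2)))"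
  proof (intro sum.cong refl)
    fix n assume "n \<in> {..2*M}"
    show "(\<Sum>i\<le>n. (c i * c (n-i) * u^(i+(n-i)) * v^(2*M-(i+(n-i))) * K i (n-i)) / 4) =
      u^n * v^(2*M-n) / 4 * (\<Sum>i\<le>n. (\<alpha> i * real (M choose i)) * (\<alpha> (n-i) * real (M choose (n-i))) *
             (real n*(2*real M - real n) - (2*real M-1)*(2*real i - real n)^2))"
      unfolding sum_distrib_left
    proof (intro sum.cong refl)
      fix i assume "i \<in> {..n}"
      then have "i \<le> n" by simp
      then have e: "i + (n-i) = n" and r: "real (n-i) = real n - real i" by (auto simp: of_nat_diff)
      show "(c i * c (n-i) * u^(i+(n-i)) * v^(2*M-(i+(n-i))) * K i (n-i)) / 4 =
        u^n * v^(2*M-n) / 4 * ((\<alpha> i * real (M choose i)) * (\<alpha> (n-i) * real (M choose (n-i))) *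
             (real n*(2*real M - real n) - (2*real M-1)*(2*real i - real n)^2))"
      proof -
        have Ke: "K i (n-i) = real n*(2*real M - real n) - (2*real M-1)*(2*real i - real n)^2"
          unfolding K_def r by (simp add: power2_eq_square algebra_simps)
        show ?thesis unfolding e Ke c_def by (simp add: field_simps)
      qed
    qed
  qed
  also have "\<dots> \<ge> 0"
  proof (rule sum_nonneg)
    fix n assume "n \<in> {..2*M}"
    then have "n \<le> 2*M" by simp
    show "0 \<le> u^n * v^(2*M-n) / 4 * (\<Sum>i\<le>n. (\<alpha> i * real (M choose i)) * (\<alpha> (n-i) * real (M choose (n-i))) *
             (real n*(2*real M - real n) - (2*real M-1)*(2*real i - real n)^2))"
      by (rule mult_nonneg_nonneg) (use u v in simp, rule Sn_nonneg[OF lc \<open>n \<le> 2*M\<close> M1])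
  qed
  finally show ?thesis .
qed

definition pp :: "nat \<Rightarrow> nat \<Rightarrow> real \<Rightarrow> real" where
  "pp a b t = (1-t)^a * t^b"
definition dd :: "nat \<Rightarrow> nat \<Rightarrow> real \<Rightarrow> real" where
  "dd a b t = -(real a)*pp (a-1) b t + real b * pp a (b-1) t"

lemma pp_deriv: "((pp a b) has_real_derivative dd a b t) (at t)"
  unfolding pp_def[abs_def] dd_def pp_def
  by (auto intro!: derivative_eq_intros simp: algebra_simps)

lemma dd_deriv: "((dd a b) has_real_derivative
   (-(real a)*dd (a-1) b t + real b * dd a (b-1) t)) (at t)"
proof -
  have e: "dd a b = (\<lambda>t. -(real a)*pp (a-1) b t + real b * pp a (b-1) t)"
    by (rule ext) (simp add: dd_def)
  show ?thesis unfolding e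
    by (auto intro!: derivative_eq_intros pp_deriv simp: algebra_simps)
qed

lemma pp_eval: "pp a b x = (1-x)^a * x^b" by (simp add: pp_def)

lemma dd_eval:
  assumes "0 < u" "0 < v" "u = 1 - x" "v = x"
  shows "dd a b x = u^a* v^b*(real b*u - real a* v)/(u* v)"
proof -
  have p: "pp a' b' x = u^a'* v^b'" for a' b' using assms by (simp add: pp_def)
  show ?thesis unfolding dd_def p using assms(1,2)
    by (cases a; cases b) (auto simp: field_simps)
qed

lemma dd2_eval:
  assumes "0 < u" "0 < v" "u = 1 - x" "v = x"
  shows "-(real a)*dd (a-1) b x + real b * dd a (b-1) x =
     u^a* v^b*(real a*(real a-1)* v^2 - 2*real a*real b*u* v + real b*(real b-1)*u^2)/(u^2* v^2)"
proof -
  have e: "dd a' b' x = u^a'* v^b'*(real b'*u - real a'* v)/(u* v)" for a' b'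
    using dd_eval[OF assms] .
  show ?thesis unfolding e using assms(1,2)
    apply (cases a; cases b)
    apply (auto simp: field_simps power2_eq_square)
    done
qed

theorem mainTheorem4:
  fixes M :: nat and \<alpha> :: "nat \<Rightarrow> real" and g :: "real \<Rightarrow> real" and x :: real
  assumes "M \<ge> 1"
    and "log_concave_seq M \<alpha>"
    and "\<And>t. g t = (\<Sum>i=0..M. \<alpha> i * real (M choose i) * (1 - t) ^ i * t ^ (M - i))"
    and "0 < x" and "x < 1"
  shows "(real M - 1) / real M * (deriv g x) ^ 2 \<ge> g x * deriv (deriv g) x"
proof -
  define c where "c i = \<alpha> i * real (M choose i)" for i
  have gform: "g = (\<lambda>t. \<Sum>i\<in>{..M}. c i * pp i (M-i) t)"
    by (rule ext) (simp add: assms(3) c_def pp_def atLeast0AtMost mult.assoc)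
  define g1 where "g1 t = (\<Sum>i\<in>{..M}. c i * dd i (M-i) t)" for t
  define g2 where "g2 t = (\<Sum>i\<in>{..M}. c i * (-(real i)*dd (i-1) (M-i) t + real (M-i) * dd i (M-i-1) t))" for t
  have D1: "(g has_real_derivative g1 t) (at t)" for t
    unfolding gform g1_def by (auto intro!: derivative_eq_intros pp_deriv simp: mult.commute)
  have dg: "deriv g = g1" by (rule ext) (rule DERIV_imp_deriv[OF D1])
  have D2: "(g1 has_real_derivative g2 x) (at x)"
    unfolding g1_def[abs_def] g2_def by (auto intro!: derivative_eq_intros dd_deriv simp: mult.commute)
  have ddg: "deriv (deriv g) x = g2 x" unfolding dg by (rule DERIV_imp_deriv[OF D2])
  define u where "u = 1 - x"
  define v where "v = x"
  have u: "u > 0" and v: "v > 0" and uv: "u + v = 1" using assms(4,5) by (auto simp: u_def v_def)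
  define T where "T \<equiv> (\<lambda>i. u^i * v^(M-i))"
  define P where "P \<equiv> (\<lambda>i. (real M - real i)*u - real i * v)"
  define Q where "Q \<equiv> (\<lambda>i. real i*(real i-1)* v^2 - 2*real i*(real M-real i)*u* v + (real M-real i)*(real M - real i-1)*u^2)"
  have G0: "g x = (\<Sum>i\<le>M. c i*T i)" by (simp add: gform pp_def T_def u_def v_def)
  have G1: "g1 x = (\<Sum>i\<le>M. c i*T i*P i)/(u* v)"
    unfolding g1_def sum_divide_distrib
  proof (rule sum.cong[OF refl])
    fix i assume "i \<in> {..M}"
    then have r: "real (M-i) = real M - real i" by (simp add: of_nat_diff)
    show "c i * dd i (M - i) x = c i * T i * P i / (u * v)"
      unfolding dd_eval[OF u v u_def v_def] T_def P_def r by simp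
  qed
  have G2: "g2 x = (\<Sum>i\<le>M. c i*T i*Q i)/(u^2* v^2)"
    unfolding g2_def sum_divide_distrib
  proof (rule sum.cong[OF refl])
    fix i assume "i \<in> {..M}"
    then have r: "real (M-i) = real M - real i" by (simp add: of_nat_diff)
    show "c i * (-(real i)*dd (i-1) (M-i) x + real (M-i) * dd i (M-i-1) x) = c i * T i * Q i / (u^2 * v^2)"
      using dd2_eval[OF u v u_def v_def, of i "M-i"] unfolding T_def Q_def r by simp
  qed
  have M0: "real M > 0" using assms(1) by simp
  have key: "0 \<le> (real M - 1)*(\<Sum>i\<le>M. c i*T i*P i)^2 - real M*(\<Sum>i\<le>M. c i*T i)*(\<Sum>i\<le>M. c i*T i*Q i)"
    using final_ineq[OF u v uv assms(1,2)] unfolding c_def T_def P_def Q_def by simp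
  have "(real M - 1) / real M * (g1 x) ^ 2 - g x * g2 x =
     ((real M - 1)*(\<Sum>i\<le>M. c i*T i*P i)^2 - real M*(\<Sum>i\<le>M. c i*T i)*(\<Sum>i\<le>M. c i*T i*Q i)) / (real M * u^2 * v^2)"
    unfolding G0 G1 G2 using M0 u v by (simp add: field_simps power2_eq_square)
  also have "\<dots> \<ge> 0" using key M0 u v by simp
  moreover have "deriv g1 x = g2 x" by (rule DERIV_imp_deriv[OF D2])
  ultimately show ?thesis unfolding dg by simp
qed

end
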